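(* Let $V$ be a diagonal $l$-qubit unitary in the third level $\mathcal{C}^{(3)}$ of the Clifford hierarchy and let $|V\rangle=V|+\rangle^{\otimes l}$. Let $S_V=\langle VX_iV^{\dagger}: i\in[l]\rangle$ be the group generated by the operators $VX_iV^\dagger$, and define the twirling map $$\mathcal{T}_V(\rho)=\frac{1}{|S_V|}\sum_{s\in S_V}s\rho s^{\dagger}.$$ Then for any quantum channel $\mathcal{E}$ on $l$ qubits, $$\mathcal{T}_V\circ\mathcal{E}(|V\rangle\langle V|)=\sum_{x\in\mathbb{F}_2^l}p_x\,Z_x|V\rangle\langle V|Z_x^{\dagger}$$ for some probability distribution $\{p_x\}_{x\in\mathbb{F}_2^l}$, where $Z_x=\bigotimes_{i=1}^l Z_i^{x_i}$.
   Context: The $l$-qubit Pauli group $\mathcal{P}_l$ consists of tensor products of $I,X,Y,Z$ times a phase in $\{\pm1,\pm i\}$. The Clifford hierarchy: $\mathcal{C}^{(1)}=\mathcal{P}_l$ and $\mathcal{C}^{(k)}=\{W\in U(2^l): WPW^\dagger\in\mathcal{C}^{(k-1)}\ \forall P\in\mathcal{P}_l\}$ for $k\ge2$. $X_i,Z_i$ denote the Pauli $X,Z$ on qubit $i$, and $|+\rangle=(|0\rangle+|1\rangle)/\sqrt2$. *)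

theory Defs
  imports "Jordan_Normal_Form.Matrix"
begin

text \<open>An l-qubit operator is a complex matrix of size 2^l x 2^l. Basis state |a> (a < 2^l)
  has qubit i in state bit i of a (bitval a i).\<close>

definition bitval :: "nat \<Rightarrow> nat \<Rightarrow> nat" where
  "bitval a i = (a div 2 ^ i) mod 2"

definition dag :: "complex mat \<Rightarrow> complex mat" where
  "dag A = mat (dim_col A) (dim_row A) (\<lambda>(i, j). cnj (A $$ (j, i)))"

definition unitary_mat :: "nat \<Rightarrow> complex mat \<Rightarrow> bool" where
  "unitary_mat n W \<longleftrightarrow> W \<in> carrier_mat n n \<and> W * dag W = 1\<^sub>m n \<and> dag W * W = 1\<^sub>m n"

definition msum :: "nat \<Rightarrow> ('x \<Rightarrow> complex mat) \<Rightarrow> 'x set \<Rightarrow> complex mat" where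
  "msum n f A = mat n n (\<lambda>(a, b). \<Sum>x\<in>A. f x $$ (a, b))"

definition msum_list :: "nat \<Rightarrow> complex mat list \<Rightarrow> complex mat" where
  "msum_list n Ms = mat n n (\<lambda>(a, b). \<Sum>M\<leftarrow>Ms. M $$ (a, b))"

definition pI :: "complex mat" where "pI = mat_of_rows_list 2 [[1, 0], [0, 1]]"
definition pX :: "complex mat" where "pX = mat_of_rows_list 2 [[0, 1], [1, 0]]"
definition pY :: "complex mat" where "pY = mat_of_rows_list 2 [[0, -\<i>], [\<i>, 0]]"
definition pZ :: "complex mat" where "pZ = mat_of_rows_list 2 [[1, 0], [0, -1]]"

definition tensor :: "nat \<Rightarrow> (nat \<Rightarrow> complex mat) \<Rightarrow> complex mat" where
  "tensor l Ps = mat (2 ^ l) (2 ^ l) (\<lambda>(a, b). \<Prod>i<l. Ps i $$ (bitval a i, bitval b i))"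

definition Xq :: "nat \<Rightarrow> nat \<Rightarrow> complex mat" where
  "Xq l i = tensor l (\<lambda>j. if j = i then pX else pI)"

definition Zq :: "nat \<Rightarrow> nat \<Rightarrow> complex mat" where
  "Zq l i = tensor l (\<lambda>j. if j = i then pZ else pI)"

definition Zvec :: "nat \<Rightarrow> (nat \<Rightarrow> bool) \<Rightarrow> complex mat" where
  "Zvec l x = tensor l (\<lambda>j. if x j then pZ else pI)"

definition F2 :: "nat \<Rightarrow> (nat \<Rightarrow> bool) set" where
  "F2 l = {x. \<forall>i. l \<le> i \<longrightarrow> \<not> x i}"

definition pauli_group :: "nat \<Rightarrow> complex mat set" where
  "pauli_group l = {c \<cdot>\<^sub>m tensor l Ps | c Ps.
      c \<in> {1, -1, \<i>, -\<i>} \<and> (\<forall>i<l. Ps i \<in> {pI, pX, pY, pZ})}"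

fun clifford :: "nat \<Rightarrow> nat \<Rightarrow> complex mat set" where
  "clifford l 0 = {}"
| "clifford l (Suc 0) = pauli_group l"
| "clifford l (Suc (Suc k)) =
     {W. unitary_mat (2 ^ l) W \<and> (\<forall>P\<in>pauli_group l. W * P * dag W \<in> clifford l (Suc k))}"

text \<open>Subgroup of the unitary group generated by a set G of n x n unitaries
  (the inverse of a unitary is its adjoint).\<close>
inductive_set gen_group :: "nat \<Rightarrow> complex mat set \<Rightarrow> complex mat set"
  for n :: nat and G :: "complex mat set" where
  gen_one: "1\<^sub>m n \<in> gen_group n G"
| gen_base: "g \<in> G \<Longrightarrow> g \<in> gen_group n G"
| gen_mult: "a \<in> gen_group n G \<Longrightarrow> b \<in> gen_group n G \<Longrightarrow> a * b \<in> gen_group n G"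
| gen_inv: "a \<in> gen_group n G \<Longrightarrow> dag a \<in> gen_group n G"

definition twirl :: "nat \<Rightarrow> complex mat set \<Rightarrow> complex mat \<Rightarrow> complex mat" where
  "twirl n S \<rho> = (1 / of_nat (card S)) \<cdot>\<^sub>m msum n (\<lambda>s. s * \<rho> * dag s) S"

definition plus_state :: "nat \<Rightarrow> complex vec" where
  "plus_state l = vec (2 ^ l) (\<lambda>_. complex_of_real (1 / sqrt (2 ^ l)))"

definition ketbra :: "complex vec \<Rightarrow> complex mat" where
  "ketbra v = mat (dim_vec v) (dim_vec v) (\<lambda>(a, b). v $ a * cnj (v $ b))"

definition quantum_channel :: "nat \<Rightarrow> (complex mat \<Rightarrow> complex mat) \<Rightarrow> bool" where
  "quantum_channel l E \<longleftrightarrow> (\<exists>Ks. (\<forall>K\<in>set Ks. K \<in> carrier_mat (2 ^ l) (2 ^ l)) \<and>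
      msum_list (2 ^ l) (map (\<lambda>K. dag K * K) Ks) = 1\<^sub>m (2 ^ l) \<and>
      (\<forall>\<rho>\<in>carrier_mat (2 ^ l) (2 ^ l). E \<rho> = msum_list (2 ^ l) (map (\<lambda>K. K * \<rho> * dag K) Ks)))"

end

theory Submission
  imports Defs
begin



lemma bit_lt: "(a::nat) < 2 ^ l \<Longrightarrow> bit a i \<Longrightarrow> i < l"
  by (metis bit_take_bit_iff take_bit_nat_eq_self)

lemma xor_lt: "(a::nat) < 2 ^ l \<Longrightarrow> y < 2 ^ l \<Longrightarrow> xor a y < 2 ^ l"
  by (metis take_bit_nat_eq_self take_bit_xor take_bit_nat_less_exp)

lemma eq_bits: "(a::nat) < 2 ^ l \<Longrightarrow> b < 2 ^ l \<Longrightarrow> (\<forall>j<l. bit a j = bit b j) \<Longrightarrow> a = b"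
  by (rule bit_eqI) (metis bit_lt)

lemma xor_swap: "(a::nat) = xor b y \<longleftrightarrow> b = xor a y"
  by (metis xor.assoc xor_self_eq xor.right_neutral)

lemma bitval_bit: "bitval a i = (if bit a i then 1 else 0)"
  unfolding bitval_def bit_iff_odd by presburger

lemma split_top: "(y::nat) < 2 ^ Suc k \<Longrightarrow> \<not> y < 2 ^ k \<Longrightarrow> y = xor (y - 2^k) (2^k) \<and> y - 2^k < 2^k"
proof -
  assume a: "y < 2 ^ Suc k" "\<not> y < 2 ^ k"
  have lt: "y - 2^k < 2^k" using a by auto
  have "y = (y - 2^k) + 2^k" using a by auto
  also have "\<dots> = xor (y - 2^k) (2^k)"
    apply (rule disjunctive_add_eq_xor)
    apply (rule bit_eqI)
    using bit_lt[OF lt] by (auto simp: bit_and_iff bit_exp_iff)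
  finally show ?thesis using lt by simp
qed



definition smat :: "nat \<Rightarrow> (nat \<Rightarrow> complex) \<Rightarrow> nat \<Rightarrow> complex mat" where
  "smat n v y = mat n n (\<lambda>(a, b). if b = xor a y then v a * cnj (v b) else 0)"

lemma xor_cancel[simp]: "xor (xor (a::nat) y) y = a"
  by (metis xor.assoc xor_self_eq xor.right_neutral)

lemma sum_single: "finite A \<Longrightarrow> t \<in> A \<Longrightarrow> (\<And>c. c \<in> A \<Longrightarrow> c \<noteq> t \<Longrightarrow> f c = 0) \<Longrightarrow> sum f A = f t"
  by (metis sum.remove sum.neutral DiffE singletonI add.right_neutral)

lemma mult_entry: "A \<in> carrier_mat n n \<Longrightarrow> B \<in> carrier_mat n n \<Longrightarrow> a < n \<Longrightarrow> b < n \<Longrightarrow>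
   (A * B) $$ (a, b) = (\<Sum>c<n. A $$ (a, c) * B $$ (c, b))"
  by (simp add: index_mult_mat scalar_prod_def lessThan_atLeast0)

lemma smat_carrier[simp]: "smat n v y \<in> carrier_mat n n" by (simp add: smat_def)

lemma smat_left:
  assumes "M \<in> carrier_mat (2^l) (2^l)" "a < 2^l" "b < 2^l" "y < 2^l"
  shows "(smat (2^l) v y * M) $$ (a, b) = v a * cnj (v (xor a y)) * M $$ (xor a y, b)"
proof -
  have xl: "xor a y < 2^l" using xor_lt assms by blast
  have "(smat (2^l) v y * M) $$ (a, b) = (\<Sum>c<2^l. smat (2^l) v y $$ (a, c) * M $$ (c, b))"
    using assms by (simp add: mult_entry)
  also have "\<dots> = smat (2^l) v y $$ (a, xor a y) * M $$ (xor a y, b)"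
    by (rule sum_single) (use xl assms in \<open>auto simp: smat_def\<close>)
  finally show ?thesis using assms xl by (simp add: smat_def)
qed

lemma smat_right:
  assumes "M \<in> carrier_mat (2^l) (2^l)" "a < 2^l" "b < 2^l" "y < 2^l"
  shows "(M * smat (2^l) v y) $$ (a, b) = M $$ (a, xor b y) * v (xor b y) * cnj (v b)"
proof -
  have xl: "xor b y < 2^l" using xor_lt assms by blast
  have "(M * smat (2^l) v y) $$ (a, b) = (\<Sum>c<2^l. M $$ (a, c) * smat (2^l) v y $$ (c, b))"
    using assms by (simp add: mult_entry)
  also have "\<dots> = M $$ (a, xor b y) * smat (2^l) v y $$ (xor b y, b)"
  proof (rule sum_single)
    fix c assume c: "c \<in> {..<2^l}" "c \<noteq> xor b y"
    then have "b \<noteq> xor c y" by (metis xor_cancel)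
    then show "M $$ (a, c) * smat (2^l) v y $$ (c, b) = 0" using c assms by (simp add: smat_def)
  qed (use xl in auto)
  also have "smat (2^l) v y $$ (xor b y, b) = v (xor b y) * cnj (v b)"
    using xl assms by (simp add: smat_def xor.assoc)
  finally show ?thesis by (simp add: mult.assoc)
qed

lemma dag_index: "A \<in> carrier_mat n n \<Longrightarrow> a < n \<Longrightarrow> b < n \<Longrightarrow> dag A $$ (a, b) = cnj (A $$ (b, a))"
  by (simp add: dag_def)

lemma dag_carrier: "A \<in> carrier_mat n n \<Longrightarrow> dag A \<in> carrier_mat n n"
  unfolding dag_def by (intro carrier_matI) auto

lemma smat_dag: "dag (smat n v y) = smat n v y"
proof (rule eq_matI)
  fix a b assume "a < dim_row (smat n v y)" "b < dim_col (smat n v y)"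
  then show "dag (smat n v y) $$ (a, b) = smat n v y $$ (a, b)"
    using xor_swap[of a b y] by (auto simp: dag_def smat_def)
qed (auto simp: dag_def smat_def)

lemma smat_mult:
  assumes "\<And>c. c < 2^l \<Longrightarrow> cnj (v c) * v c = 1" "y < 2^l" "z < 2^l"
  shows "smat (2^l) v y * smat (2^l) v z = smat (2^l) v (xor y z)"
proof (rule eq_matI)
  fix a b assume ab: "a < dim_row (smat (2^l) v (xor y z))" "b < dim_col (smat (2^l) v (xor y z))"
  hence ab: "a < 2^l" "b < 2^l" by (auto simp: smat_def)
  have xl: "xor a y < 2^l" using xor_lt assms ab by blast
  show "(smat (2^l) v y * smat (2^l) v z) $$ (a, b) = smat (2^l) v (xor y z) $$ (a, b)"
    using ab xl assms(1)[OF xl] apply (subst smat_left[where l=l])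
    using assms by (auto simp: smat_def xor.assoc)
qed (auto simp: smat_def)

lemma smat_zero:
  assumes "\<And>c. c < n \<Longrightarrow> cnj (v c) * v c = 1"
  shows "smat n v 0 = 1\<^sub>m n"
proof (rule eq_matI)
  fix a b assume "a < dim_row (1\<^sub>m n)" "b < dim_col (1\<^sub>m n)"
  then show "smat n v 0 $$ (a, b) = 1\<^sub>m n $$ (a, b)"
    using assms[of a] by (auto simp: smat_def mult.commute)
qed (auto simp: smat_def)




definition chi :: "nat \<Rightarrow> (nat \<Rightarrow> bool) \<Rightarrow> nat \<Rightarrow> complex" where
  "chi l x a = (\<Prod>i<l. if x i \<and> bit a i then -1 else 1)"

lemma prod_if: fixes l :: nat shows "(\<Prod>j<l. if P j then g j else (0::complex)) = (if \<forall>j<l. P j then \<Prod>j<l. g j else 0)"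
  by (induction l rule: nat.induct) (auto simp: less_Suc_eq)

lemma bitval_lt: "bitval a i < 2" by (simp add: bitval_def)

lemma pI_idx: "p < 2 \<Longrightarrow> q < 2 \<Longrightarrow> pI $$ (p, q) = (if p = q then 1 else 0)"
  by (auto simp: pI_def mat_of_rows_list_def less_2_cases_iff)
lemma pX_idx: "p < 2 \<Longrightarrow> q < 2 \<Longrightarrow> pX $$ (p, q) = (if p \<noteq> q then 1 else 0)"
  by (auto simp: pX_def mat_of_rows_list_def less_2_cases_iff)
lemma pZ_idx: "p < 2 \<Longrightarrow> q < 2 \<Longrightarrow> pZ $$ (p, q) = (if p = q then (if p = 1 then -1 else 1) else 0)"
  by (auto simp: pZ_def mat_of_rows_list_def less_2_cases_iff)

lemma bitval_eq: "(bitval a i = bitval b i) = (bit a i = bit b i)"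
  by (simp add: bitval_bit)

lemma Xq_idx:
  assumes "i < l" "a < 2^l" "b < 2^l"
  shows "Xq l i $$ (a, b) = (if b = xor a (2^i) then 1 else 0)"
proof -
  have "Xq l i $$ (a, b) = (\<Prod>j<l. if bit b j = (bit a j \<noteq> (j = i)) then 1 else 0)"
    using assms unfolding Xq_def tensor_def
    by (auto intro!: prod.cong simp: pX_idx pI_idx bitval_lt bitval_eq)
  also have "\<dots> = (if \<forall>j<l. bit b j = (bit a j \<noteq> (j = i)) then 1 else 0)"
    using prod_if[of "\<lambda>j. bit b j = (bit a j \<noteq> (j = i))" "\<lambda>_. 1" l] by simp
  also have "(\<forall>j<l. bit b j = (bit a j \<noteq> (j = i))) = (b = xor a (2^i))"
  proof
    assume h: "\<forall>j<l. bit b j = (bit a j \<noteq> (j = i))"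
    have "2^i < (2::nat)^l" using assms by simp
    then show "b = xor a (2^i)"
      using h assms by (intro eq_bits[where l=l]) (auto simp: xor_lt bit_xor_iff bit_exp_iff)
  qed (auto simp: bit_xor_iff bit_exp_iff)
  finally show ?thesis .
qed

lemma Xq_carrier: "Xq l i \<in> carrier_mat (2^l) (2^l)"
  by (simp add: Xq_def tensor_def)

lemma Zvec_carrier: "Zvec l x \<in> carrier_mat (2^l) (2^l)"
  by (simp add: Zvec_def tensor_def)

lemma Zvec_idx:
  assumes "a < 2^l" "b < 2^l"
  shows "Zvec l x $$ (a, b) = (if a = b then chi l x a else 0)"
proof -
  have "Zvec l x $$ (a, b) = (\<Prod>j<l. if bit a j = bit b j then (if x j \<and> bit a j then -1 else 1) else 0)"
    using assms unfolding Zvec_def tensor_def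
    by (auto intro!: prod.cong simp: pZ_idx pI_idx bitval_lt bitval_eq) (auto simp: bitval_bit split: if_splits)
  also have "\<dots> = (if \<forall>j<l. bit a j = bit b j then chi l x a else 0)"
    by (simp only: prod_if chi_def)
  also have "(\<forall>j<l. bit a j = bit b j) = (a = b)"
    using eq_bits assms by blast
  finally show ?thesis .
qed

lemma chi_cnj: "cnj (chi l x a) = chi l x a"
  unfolding chi_def by (induction l) auto

lemma chi_sq: "chi l x a * chi l x a = 1"
  unfolding chi_def by (induction l) auto

lemma chi_xor: "chi l x a * chi l x b = chi l x (xor a b)"
  unfolding chi_def prod.distrib[symmetric] by (rule prod.cong) (auto simp: bit_xor_iff)





lemma diag_left:
  assumes "D \<in> carrier_mat n n" "M \<in> carrier_mat n n" "a < n" "b < n"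
    "\<And>i j. i < n \<Longrightarrow> j < n \<Longrightarrow> i \<noteq> j \<Longrightarrow> D $$ (i, j) = 0"
  shows "(D * M) $$ (a, b) = D $$ (a, a) * M $$ (a, b)"
proof -
  have "(D * M) $$ (a, b) = (\<Sum>c<n. D $$ (a, c) * M $$ (c, b))" using assms by (intro mult_entry)
  also have "\<dots> = D $$ (a, a) * M $$ (a, b)"
    by (rule sum_single) (use assms in auto)
  finally show ?thesis .
qed

lemma diag_right:
  assumes "D \<in> carrier_mat n n" "M \<in> carrier_mat n n" "a < n" "b < n"
    "\<And>i j. i < n \<Longrightarrow> j < n \<Longrightarrow> i \<noteq> j \<Longrightarrow> D $$ (i, j) = 0"
  shows "(M * D) $$ (a, b) = M $$ (a, b) * D $$ (b, b)"
proof -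
  have "(M * D) $$ (a, b) = (\<Sum>c<n. M $$ (a, c) * D $$ (c, b))" using assms by (intro mult_entry)
  also have "\<dots> = M $$ (a, b) * D $$ (b, b)"
    by (rule sum_single) (use assms in auto)
  finally show ?thesis .
qed

lemma clif3: "V \<in> clifford l 3 \<Longrightarrow> unitary_mat (2^l) V"
  by (simp add: numeral_3_eq_3)

locale diagV =
  fixes l :: nat and V :: "complex mat"
  assumes unit: "unitary_mat (2^l) V" and diag: "diagonal_mat V"
begin

abbreviation "n \<equiv> (2::nat)^l"
definition "v a = V $$ (a, a)"

lemma Vc: "V \<in> carrier_mat n n" using unit unfolding unitary_mat_def by auto

lemma Voff: "i < n \<Longrightarrow> j < n \<Longrightarrow> i \<noteq> j \<Longrightarrow> V $$ (i, j) = 0"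
  using diag Vc unfolding diagonal_mat_def by auto

lemma dagV_off: "i < n \<Longrightarrow> j < n \<Longrightarrow> i \<noteq> j \<Longrightarrow> dag V $$ (i, j) = 0"
  using Voff Vc by (simp add: dag_index)

lemma v_unit: "c < n \<Longrightarrow> cnj (v c) * v c = 1"
proof -
  assume c: "c < n"
  have "(dag V * V) $$ (c, c) = 1" using unit c unfolding unitary_mat_def by simp
  moreover have "(dag V * V) $$ (c, c) = dag V $$ (c, c) * V $$ (c, c)"
    using c Vc dag_carrier[OF Vc] dagV_off by (intro diag_left) auto
  ultimately show ?thesis using c Vc by (simp add: dag_index v_def)
qed

lemma v_nz: "c < n \<Longrightarrow> v c \<noteq> 0" using v_unit by force

lemma conj_gen: "i < l \<Longrightarrow> V * Xq l i * dag V = smat n v (2^i)"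
proof (rule eq_matI)
  fix a b assume i: "i < l" and ab: "a < dim_row (smat n v (2^i))" "b < dim_col (smat n v (2^i))"
  hence ab: "a < n" "b < n" by (auto simp: smat_def)
  have "(V * Xq l i * dag V) $$ (a, b) = (V * Xq l i) $$ (a, b) * dag V $$ (b, b)"
    using ab Vc Xq_carrier dag_carrier[OF Vc] dagV_off by (intro diag_right) auto
  also have "\<dots> = V $$ (a, a) * Xq l i $$ (a, b) * dag V $$ (b, b)"
    using ab Vc Xq_carrier Voff by (subst diag_left) auto
  finally show "(V * Xq l i * dag V) $$ (a, b) = smat n v (2^i) $$ (a, b)"
    using ab i Vc by (simp add: Xq_idx dag_index smat_def v_def)
qed (use Vc Xq_carrier dag_carrier[OF Vc] in \<open>auto simp: smat_def\<close>)

abbreviation "G \<equiv> {V * Xq l i * dag V | i. i < l}"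

lemma pow_lt: "i < l \<Longrightarrow> (2::nat)^i < 2^l" by simp

lemma gen_sub: "gen_group n G \<subseteq> smat n v ` {..<n}"
proof
  fix g assume "g \<in> gen_group n G"
  then show "g \<in> smat n v ` {..<n}"
  proof (induction rule: gen_group.induct)
    case gen_one
    then show ?case using smat_zero[of n v, OF v_unit] by (metis image_eqI lessThan_iff zero_less_power pos2)
  next
    case (gen_base g)
    then obtain i where "i < l" "g = V * Xq l i * dag V" by auto
    then show ?case using conj_gen pow_lt by auto
  next
    case (gen_mult a b)
    then obtain y z where "y < n" "z < n" "a = smat n v y" "b = smat n v z" by auto
    then show ?case using smat_mult[of l v y z, OF v_unit] xor_lt by auto
  next
    case (gen_inv a)
    then show ?case using smat_dag by auto
  qed
qed

lemma gen_sup_aux: "k \<le> l \<Longrightarrow> y < 2^k \<Longrightarrow> smat n v y \<in> gen_group n G"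
proof (induction k arbitrary: y)
  case 0
  then have "y = 0" by simp
  then show ?case using smat_zero[of n v, OF v_unit] by (simp add: gen_group.gen_one)
next
  case (Suc k)
  show ?case
  proof (cases "y < 2^k")
    case True then show ?thesis using Suc.IH Suc.prems(1) by simp
  next
    case False
    then have y: "y = xor (y - 2^k) (2^k)" "y - 2^k < 2^k" using split_top[OF Suc.prems(2)] by blast+
    have kl: "k < l" using Suc.prems(1) by simp
    have lt2: "(2::nat)^k < n" using kl by (rule pow_lt)
    have lt: "y - 2^k < n" "(2::nat)^k < n" using y(2) lt2 by linarith+
    have "smat n v y = smat n v (y - 2^k) * smat n v (2^k)"
      using smat_mult[of l v "y - 2^k" "2^k", OF v_unit] lt y(1)[symmetric] by simp
    moreover have "smat n v (y - 2^k) \<in> gen_group n G" using Suc.IH Suc.prems(1) y(2) by simp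
    moreover have "smat n v (2^k) \<in> gen_group n G"
      using conj_gen[OF kl] kl by (intro gen_group.gen_base) (metis (mono_tags, lifting) mem_Collect_eq)
    ultimately show ?thesis by (simp add: gen_group.gen_mult)
  qed
qed

lemma gen_eq: "gen_group n G = smat n v ` {..<n}"
  using gen_sub gen_sup_aux[of l] by auto

lemma smat_inj: "inj_on (smat n v) {..<n}"
proof (rule inj_onI)
  fix y z assume yz: "y \<in> {..<n}" "z \<in> {..<n}" "smat n v y = smat n v z"
  show "y = z"
  proof (rule ccontr)
    assume ne: "y \<noteq> z"
    have "smat n v y $$ (0, y) = smat n v z $$ (0, y)" by (simp only: yz(3))
    then have "v 0 * cnj (v y) = 0" using yz(1,2) ne by (simp add: smat_def)
    moreover have "v 0 * cnj (v y) \<noteq> 0" using v_nz yz by simp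
    ultimately show False by simp
  qed
qed

lemma card_gen: "card (gen_group n G) = n"
  using gen_eq smat_inj by (simp add: card_image)

end



lemma F2_0: "F2 0 = {\<lambda>_. False}"
  by (auto simp: F2_def)

lemma F2_Suc: "F2 (Suc l) = (\<lambda>x. x(l := False)) ` F2 l \<union> (\<lambda>x. x(l := True)) ` F2 l"
proof
  show "F2 (Suc l) \<subseteq> (\<lambda>x. x(l := False)) ` F2 l \<union> (\<lambda>x. x(l := True)) ` F2 l"
  proof
    fix x assume x: "x \<in> F2 (Suc l)"
    have x0: "x(l := False) \<in> F2 l" using x by (auto simp: F2_def)
    show "x \<in> (\<lambda>x. x(l := False)) ` F2 l \<union> (\<lambda>x. x(l := True)) ` F2 l"
    proof (cases "x l")
      case True
      then have "x = (x(l := False))(l := True)" by (intro ext) simp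
      then show ?thesis using x0 by blast
    next
      case False
      then have "x = (x(l := False))(l := False)" by (intro ext) simp
      then show ?thesis using x0 by blast
    qed
  qed
next
  show "(\<lambda>x. x(l := False)) ` F2 l \<union> (\<lambda>x. x(l := True)) ` F2 l \<subseteq> F2 (Suc l)"
    unfolding F2_def by auto
qed

lemma F2_finite: "finite (F2 l)"
  by (induction l) (auto simp: F2_0 F2_Suc)

lemma F2_not: "x \<in> F2 l \<Longrightarrow> \<not> x l" by (simp add: F2_def)

lemma chi_upd: "chi (Suc l) (x(l := t)) y = chi l x y * (if t \<and> bit y l then -1 else 1)"
proof -
  have "(\<Prod>i<l. if (x(l:=t)) i \<and> bit y i then -1 else (1::complex)) = (\<Prod>i<l. if x i \<and> bit y i then -1 else 1)"
    by (rule prod.cong) auto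
  then show ?thesis unfolding chi_def prod.lessThan_Suc by simp
qed

lemma chi_sum_gen: "(\<Sum>x\<in>F2 l. chi l x y) = (if \<forall>i<l. \<not> bit y i then 2^l else 0)"
proof (induction l)
  case 0
  then show ?case by (simp add: F2_0 chi_def)
next
  case (Suc l)
  have rec: "(x(l := t))(l := False) = x" if "x \<in> F2 l" for x t
    using F2_not[OF that] by (intro ext) simp
  have inj0: "inj_on (\<lambda>x. x(l := False)) (F2 l)"
    by (rule inj_on_inverseI[where g = "\<lambda>x. x(l := False)"]) (rule rec)
  have inj1: "inj_on (\<lambda>x. x(l := True)) (F2 l)"
    by (rule inj_on_inverseI[where g = "\<lambda>x. x(l := False)"]) (rule rec)
  have ne: "\<And>x z. x(l := False) \<noteq> z(l := True)"
  proof
    fix x z :: "nat \<Rightarrow> bool" assume "x(l := False) = z(l := True)"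
    then have "(x(l := False)) l = (z(l := True)) l" by simp
    then show False by simp
  qed
  have disj: "(\<lambda>x. x(l := False)) ` F2 l \<inter> (\<lambda>x. x(l := True)) ` F2 l = {}"
    using ne by blast
  have "(\<Sum>x\<in>F2 (Suc l). chi (Suc l) x y) =
        (\<Sum>x\<in>(\<lambda>x. x(l := False)) ` F2 l. chi (Suc l) x y) + (\<Sum>x\<in>(\<lambda>x. x(l := True)) ` F2 l. chi (Suc l) x y)"
    unfolding F2_Suc by (rule sum.union_disjoint) (auto simp: F2_finite disj)
  also have "\<dots> = (\<Sum>x\<in>F2 l. chi l x y) + (\<Sum>x\<in>F2 l. chi l x y * (if bit y l then -1 else 1))"
    by (simp add: sum.reindex inj0 inj1 chi_upd)
  also have "\<dots> = (\<Sum>x\<in>F2 l. chi l x y) * (1 + (if bit y l then -1 else 1))"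
    by (simp add: sum_distrib_right[symmetric] distrib_left)
  finally show ?case using Suc.IH by (auto simp: less_Suc_eq)
qed

lemma chi_sum: "y < 2^l \<Longrightarrow> (\<Sum>x\<in>F2 l. chi l x y) = (if y = 0 then 2^l else 0)"
  using chi_sum_gen[of l y] eq_bits[of y l 0] by auto

lemma xor_zero_iff: "xor (p::nat) q = 0 \<longleftrightarrow> p = q"
  by (metis xor_cancel xor_self_eq xor.left_neutral)

lemma chi4:
  assumes "a' < 2^l" "b' < 2^l" "a < 2^l" "b < 2^l"
  shows "(\<Sum>x\<in>F2 l. chi l x a' * chi l x b' * chi l x a * chi l x b) = (if b' = xor a' (xor a b) then 2^l else 0)"
proof -
  have "(\<Sum>x\<in>F2 l. chi l x a' * chi l x b' * chi l x a * chi l x b) = (\<Sum>x\<in>F2 l. chi l x (xor (xor (xor a' b') a) b))"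
    by (simp add: chi_xor)
  also have "\<dots> = (if xor (xor (xor a' b') a) b = 0 then 2^l else 0)"
    using assms by (intro chi_sum) (simp add: xor_lt)
  also have "(xor (xor (xor a' b') a) b = 0) = (b' = xor a' (xor a b))"
    by (metis xor_zero_iff xor.assoc xor.commute xor.left_commute xor_cancel)
  finally show ?thesis .
qed

lemma chi_zero: "chi l x 0 = 1" by (simp add: chi_def)

lemma chi2:
  assumes "a' < 2^l" "b' < 2^l"
  shows "(\<Sum>x\<in>F2 l. chi l x a' * chi l x b') = (if b' = a' then 2^l else 0)"
  using chi4[OF assms, of 0 0] by (simp add: chi_zero)




lemma xor_cancel_left[simp]: "xor (a::nat) (xor a t) = t"
  by (metis xor.assoc xor_self_eq xor.left_neutral)

lemma reidx:
  assumes "(a::nat) < 2^l"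
  shows "(\<Sum>y<2^l. F y) = (\<Sum>a'<2^l. F (xor a a'))"
  by (rule sum.reindex_bij_witness[where i = "xor a" and j = "xor a"]) (use assms in \<open>auto simp: xor_lt\<close>)

lemma swap3: "finite A \<Longrightarrow> finite B \<Longrightarrow> finite C \<Longrightarrow>
  (\<Sum>x\<in>A. \<Sum>i\<in>B. \<Sum>j\<in>C. f x i j) = (\<Sum>i\<in>B. \<Sum>j\<in>C. \<Sum>x\<in>A. f x i j)"
proof -
  assume f: "finite A" "finite B" "finite C"
  have "(\<Sum>x\<in>A. \<Sum>i\<in>B. \<Sum>j\<in>C. f x i j) = (\<Sum>i\<in>B. \<Sum>x\<in>A. \<Sum>j\<in>C. f x i j)"
    by (rule sum.swap)
  also have "\<dots> = (\<Sum>i\<in>B. \<Sum>j\<in>C. \<Sum>x\<in>A. f x i j)"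
    by (rule sum.cong[OF refl]) (rule sum.swap)
  finally show ?thesis .
qed

definition cc :: "nat \<Rightarrow> complex" where "cc l = complex_of_real (1 / sqrt (2 ^ l))"

lemma cc_sq: "cc l * cc l = 1 / of_nat (2^l)"
proof -
  have "sqrt (2^l) * sqrt (2^l) = (2::real)^l" by simp
  then show ?thesis unfolding cc_def
    by (simp flip: of_real_mult)
qed

lemma cc_cnj: "cnj (cc l) = cc l" by (simp add: cc_def)

context diagV
begin

definition "uu a = v a * cc l"

lemma u_idx: "a < n \<Longrightarrow> (V *\<^sub>v plus_state l) $ a = uu a"
proof -
  assume a: "a < n"
  have "(V *\<^sub>v plus_state l) $ a = (\<Sum>c<n. V $$ (a, c) * cc l)"
    using a Vc by (simp add: scalar_prod_def plus_state_def cc_def lessThan_atLeast0)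
  also have "\<dots> = V $$ (a, a) * cc l"
    by (rule sum_single) (use a Voff in auto)
  finally show ?thesis by (simp add: uu_def v_def)
qed

lemma u_dim: "dim_vec (V *\<^sub>v plus_state l) = n" using Vc by simp

abbreviation "R0 \<equiv> ketbra (V *\<^sub>v plus_state l)"

lemma R0c: "R0 \<in> carrier_mat n n" using Vc by (simp add: ketbra_def)

lemma R0_idx: "a < n \<Longrightarrow> b < n \<Longrightarrow> R0 $$ (a, b) = uu a * cnj (uu b)"
  using Vc by (simp add: ketbra_def u_idx del: index_mult_mat_vec)

lemma uu_sq: "c < n \<Longrightarrow> cnj (uu c) * uu c = 1 / of_nat n"
proof -
  assume c: "c < n"
  have "cnj (uu c) * uu c = (cnj (v c) * v c) * (cc l * cc l)" by (simp add: uu_def cc_cnj algebra_simps)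
  then show ?thesis using v_unit[OF c] cc_sq by simp
qed

definition "tK K a = (\<Sum>c<n. K $$ (a, c) * uu c)"

lemma KR0K: assumes K: "K \<in> carrier_mat n n" and ab: "a < n" "b < n"
  shows "(K * R0 * dag K) $$ (a, b) = tK K a * cnj (tK K b)"
proof -
  have KR: "K * R0 \<in> carrier_mat n n" using K R0c by simp
  have 1: "(K * R0) $$ (a, d) = tK K a * cnj (uu d)" if d: "d < n" for d
  proof -
    have "(K * R0) $$ (a, d) = (\<Sum>c<n. K $$ (a, c) * R0 $$ (c, d))"
      using K R0c ab d by (intro mult_entry)
    also have "\<dots> = (\<Sum>c<n. K $$ (a, c) * uu c * cnj (uu d))"
      using d by (intro sum.cong) (auto simp: R0_idx mult.assoc)
    also have "\<dots> = tK K a * cnj (uu d)"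
      by (simp add: tK_def sum_distrib_right)
    finally show ?thesis .
  qed
  have "(K * R0 * dag K) $$ (a, b) = (\<Sum>d<n. (K * R0) $$ (a, d) * dag K $$ (d, b))"
    using KR dag_carrier[OF K] ab by (intro mult_entry)
  also have "\<dots> = (\<Sum>d<n. tK K a * (cnj (uu d) * cnj (K $$ (b, d))))"
    using ab K by (intro sum.cong) (auto simp: 1 dag_index mult.assoc)
  also have "\<dots> = tK K a * cnj (tK K b)"
    by (simp add: tK_def sum_distrib_left mult.commute)
  finally show ?thesis .
qed

end



context diagV
begin

lemma Zvec_off: "i < n \<Longrightarrow> j < n \<Longrightarrow> i \<noteq> j \<Longrightarrow> Zvec l x $$ (i, j) = 0"
  by (simp add: Zvec_idx)

lemma dagZ_off: "i < n \<Longrightarrow> j < n \<Longrightarrow> i \<noteq> j \<Longrightarrow> dag (Zvec l x) $$ (i, j) = 0"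
  by (simp add: dag_index[OF Zvec_carrier] Zvec_idx)

lemma ZRZ: assumes "a < n" "b < n"
  shows "(Zvec l x * R0 * dag (Zvec l x)) $$ (a, b) = chi l x a * R0 $$ (a, b) * chi l x b"
proof -
  have "(Zvec l x * R0 * dag (Zvec l x)) $$ (a, b) = (Zvec l x * R0) $$ (a, b) * dag (Zvec l x) $$ (b, b)"
    using assms Zvec_carrier[of l x] R0c dag_carrier[OF Zvec_carrier] dagZ_off
    by (intro diag_right[where n = n] mult_carrier_mat[where nc = n]) auto
  also have "(Zvec l x * R0) $$ (a, b) = Zvec l x $$ (a, a) * R0 $$ (a, b)"
    using assms Zvec_carrier R0c Zvec_off by (intro diag_left[where n = n]) auto
  finally show ?thesis using assms by (simp add: dag_index[OF Zvec_carrier] Zvec_idx chi_cnj)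
qed

lemma rho_gen:
  assumes Kc: "\<forall>K\<in>set Ks. K \<in> carrier_mat n n" and ab: "a < n" "b < n"
  shows "msum_list n (map (\<lambda>K. K * R0 * dag K) Ks) $$ (a, b) =
         (\<Sum>k<length Ks. tK (Ks ! k) a * cnj (tK (Ks ! k) b))"
proof -
  have "msum_list n (map (\<lambda>K. K * R0 * dag K) Ks) $$ (a, b) = (\<Sum>k<length Ks. (Ks ! k * R0 * dag (Ks ! k)) $$ (a, b))"
    using ab by (simp add: msum_list_def sum_list_sum_nth atLeast0LessThan)
  also have "\<dots> = (\<Sum>k<length Ks. tK (Ks ! k) a * cnj (tK (Ks ! k) b))"
    using Kc ab by (intro sum.cong refl KR0K) auto
  finally show ?thesis .
qed

lemma comp_gen:
  assumes Kc: "\<forall>K\<in>set Ks. K \<in> carrier_mat n n"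
    and Kcomp: "msum_list n (map (\<lambda>K. dag K * K) Ks) = 1\<^sub>m n"
    and cd: "c < n" "d < n"
  shows "(\<Sum>k<length Ks. \<Sum>a<n. cnj (Ks ! k $$ (a, d)) * Ks ! k $$ (a, c)) = (if d = c then 1 else 0)"
proof -
  have "(if d = c then 1 else 0) = msum_list n (map (\<lambda>K. dag K * K) Ks) $$ (d, c)"
    using Kcomp cd by simp
  also have "\<dots> = (\<Sum>k<length Ks. (dag (Ks ! k) * Ks ! k) $$ (d, c))"
    using cd by (simp add: msum_list_def sum_list_sum_nth atLeast0LessThan)
  also have "\<dots> = (\<Sum>k<length Ks. \<Sum>a<n. cnj (Ks ! k $$ (a, d)) * Ks ! k $$ (a, c))"
  proof (rule sum.cong[OF refl])
    fix k assume "k \<in> {..<length Ks}"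
    then have K: "Ks ! k \<in> carrier_mat n n" using Kc by auto
    have "(dag (Ks ! k) * Ks ! k) $$ (d, c) = (\<Sum>a<n. dag (Ks ! k) $$ (d, a) * Ks ! k $$ (a, c))"
      using K dag_carrier[OF K] cd by (intro mult_entry)
    also have "\<dots> = (\<Sum>a<n. cnj (Ks ! k $$ (a, d)) * Ks ! k $$ (a, c))"
      using K cd by (intro sum.cong refl) (simp add: dag_index)
    finally show "(dag (Ks ! k) * Ks ! k) $$ (d, c) = (\<Sum>a<n. cnj (Ks ! k $$ (a, d)) * Ks ! k $$ (a, c))" .
  qed
  finally show ?thesis by simp
qed

end



context diagV
begin

lemma trace1:
  assumes Kc: "\<forall>K\<in>set Ks. K \<in> carrier_mat n n"
    and Kcomp: "msum_list n (map (\<lambda>K. dag K * K) Ks) = 1\<^sub>m n"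
  shows "(\<Sum>a<n. \<Sum>k<length Ks. tK (Ks ! k) a * cnj (tK (Ks ! k) a)) = 1"
proof -
  let ?m = "length Ks"
  let ?K = "\<lambda>k. Ks ! k"
  have "(\<Sum>a<n. \<Sum>k<?m. tK (?K k) a * cnj (tK (?K k) a))
      = (\<Sum>a<n. \<Sum>k<?m. \<Sum>c<n. \<Sum>d<n. (?K k $$ (a, c) * uu c) * (cnj (?K k $$ (a, d)) * cnj (uu d)))"
    by (simp add: tK_def sum_product)
  also have "\<dots> = (\<Sum>k<?m. \<Sum>a<n. \<Sum>c<n. \<Sum>d<n. (?K k $$ (a, c) * uu c) * (cnj (?K k $$ (a, d)) * cnj (uu d)))"
    by (rule sum.swap)
  also have "\<dots> = (\<Sum>k<?m. \<Sum>c<n. \<Sum>d<n. \<Sum>a<n. (?K k $$ (a, c) * uu c) * (cnj (?K k $$ (a, d)) * cnj (uu d)))"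
    by (rule sum.cong[OF refl]) (rule swap3, auto)
  also have "\<dots> = (\<Sum>c<n. \<Sum>d<n. \<Sum>k<?m. \<Sum>a<n. (?K k $$ (a, c) * uu c) * (cnj (?K k $$ (a, d)) * cnj (uu d)))"
    by (rule swap3) auto
  also have "\<dots> = (\<Sum>c<n. \<Sum>d<n. (uu c * cnj (uu d)) * (\<Sum>k<?m. \<Sum>a<n. cnj (?K k $$ (a, d)) * ?K k $$ (a, c)))"
    by (simp add: sum_distrib_left mult_ac)
  also have "\<dots> = (\<Sum>c<n. \<Sum>d<n. (uu c * cnj (uu d)) * (if d = c then 1 else 0))"
    by (intro sum.cong refl) (simp add: comp_gen[OF Kc Kcomp])
  also have "\<dots> = (\<Sum>c<n. uu c * cnj (uu c))"
    by (intro sum.cong refl) (simp add: if_distrib sum.delta' cong: if_cong)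
  also have "\<dots> = (\<Sum>c<n. 1 / of_nat n)"
    by (intro sum.cong refl) (metis lessThan_iff uu_sq mult.commute)
  also have "\<dots> = 1" by simp
  finally show ?thesis .
qed

end



context diagV
begin

lemma main:
  assumes Kc: "\<forall>K\<in>set Ks. K \<in> carrier_mat n n"
    and Kcomp: "msum_list n (map (\<lambda>K. dag K * K) Ks) = 1\<^sub>m n"
  shows "\<exists>p :: (nat \<Rightarrow> bool) \<Rightarrow> real.
           (\<forall>x\<in>F2 l. 0 \<le> p x) \<and> (\<Sum>x\<in>F2 l. p x) = 1 \<and>
           twirl n (gen_group n G) (msum_list n (map (\<lambda>K. K * R0 * dag K) Ks))
           = msum n (\<lambda>x. complex_of_real (p x) \<cdot>\<^sub>m (Zvec l x * R0 * dag (Zvec l x))) (F2 l)"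
proof -
  let ?m = "length Ks"
  let ?K = "\<lambda>k. Ks ! k"
  define \<rho> where "\<rho> = msum_list n (map (\<lambda>K. K * R0 * dag K) Ks)"
  have \<rho>c: "\<rho> \<in> carrier_mat n n" by (simp add: \<rho>_def msum_list_def)
  have rho: "\<rho> $$ (a, b) = (\<Sum>k<?m. tK (?K k) a * cnj (tK (?K k) b))" if "a < n" "b < n" for a b
    unfolding \<rho>_def using rho_gen[OF Kc that] .
  define w where "w x a = chi l x a * uu a" for x a
  define p where "p x = (\<Sum>k<?m. (cmod (\<Sum>a<n. cnj (w x a) * tK (?K k) a))\<^sup>2)" for x
  have pnn: "\<forall>x\<in>F2 l. 0 \<le> p x" by (simp add: p_def sum_nonneg)
  have pq: "complex_of_real (p x) = (\<Sum>a'<n. \<Sum>b'<n. cnj (w x a') * \<rho> $$ (a', b') * w x b')" for x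
  proof -
    have "complex_of_real (p x) = (\<Sum>k<?m. (\<Sum>a<n. cnj (w x a) * tK (?K k) a) * cnj (\<Sum>a<n. cnj (w x a) * tK (?K k) a))"
      unfolding p_def of_real_sum by (intro sum.cong refl) (rule complex_norm_square)
    also have "\<dots> = (\<Sum>k<?m. \<Sum>a'<n. \<Sum>b'<n. (cnj (w x a') * tK (?K k) a') * (w x b' * cnj (tK (?K k) b')))"
      by (simp add: sum_product)
    also have "\<dots> = (\<Sum>a'<n. \<Sum>b'<n. \<Sum>k<?m. (cnj (w x a') * tK (?K k) a') * (w x b' * cnj (tK (?K k) b')))"
      by (rule swap3) auto
    also have "\<dots> = (\<Sum>a'<n. \<Sum>b'<n. cnj (w x a') * \<rho> $$ (a', b') * w x b')"
      by (intro sum.cong refl) (simp add: rho sum_distrib_left sum_distrib_right mult_ac)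
    finally show ?thesis .
  qed
  have psum: "(\<Sum>x\<in>F2 l. p x) = 1"
  proof -
    have "complex_of_real (\<Sum>x\<in>F2 l. p x) = (\<Sum>x\<in>F2 l. \<Sum>a'<n. \<Sum>b'<n. cnj (w x a') * \<rho> $$ (a', b') * w x b')"
      by (simp add: pq)
    also have "\<dots> = (\<Sum>a'<n. \<Sum>b'<n. \<Sum>x\<in>F2 l. cnj (w x a') * \<rho> $$ (a', b') * w x b')"
      by (rule swap3) (auto simp: F2_finite)
    also have "\<dots> = (\<Sum>a'<n. \<Sum>b'<n. (cnj (uu a') * \<rho> $$ (a', b') * uu b') * (\<Sum>x\<in>F2 l. chi l x a' * chi l x b'))"
      by (simp add: w_def chi_cnj sum_distrib_left mult_ac)
    also have "\<dots> = (\<Sum>a'<n. \<Sum>b'<n. (cnj (uu a') * \<rho> $$ (a', b') * uu b') * (if b' = a' then of_nat n else 0))"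
      by (intro sum.cong refl) (simp add: chi2)
    also have "\<dots> = (\<Sum>a'<n. (cnj (uu a') * \<rho> $$ (a', a') * uu a') * of_nat n)"
      by (intro sum.cong refl) (simp add: if_distrib sum.delta' cong: if_cong)
    also have "\<dots> = (\<Sum>a'<n. \<rho> $$ (a', a'))"
    proof (intro sum.cong refl)
      fix a' assume "a' \<in> {..<n}"
      then have "cnj (uu a') * uu a' = 1 / of_nat n" by (simp add: uu_sq)
      then show "cnj (uu a') * \<rho> $$ (a', a') * uu a' * of_nat n = \<rho> $$ (a', a')"
        by (simp add: field_simps)
    qed
    also have "\<dots> = (\<Sum>a'<n. \<Sum>k<?m. tK (?K k) a' * cnj (tK (?K k) a'))"
      by (intro sum.cong refl) (simp add: rho)
    also have "\<dots> = 1" by (rule trace1[OF Kc Kcomp])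
    finally show ?thesis by (metis of_real_eq_1_iff)
  qed
  have eq: "twirl n (gen_group n G) \<rho> = msum n (\<lambda>x. complex_of_real (p x) \<cdot>\<^sub>m (Zvec l x * R0 * dag (Zvec l x))) (F2 l)"
  proof (rule eq_matI)
    fix a b assume "a < dim_row (msum n (\<lambda>x. complex_of_real (p x) \<cdot>\<^sub>m (Zvec l x * R0 * dag (Zvec l x))) (F2 l))"
      "b < dim_col (msum n (\<lambda>x. complex_of_real (p x) \<cdot>\<^sub>m (Zvec l x * R0 * dag (Zvec l x))) (F2 l))"
    then have ab: "a < n" "b < n" by (auto simp: msum_def)
    define c where "c a' = xor a' (xor a b)" for a'
    have clt: "c a' < n" if "a' < n" for a' using that ab by (simp add: c_def xor_lt)
    define T where "T a' = v a * cnj (v a') * \<rho> $$ (a', c a') * v (c a') * cnj (v b)" for a'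
    have "twirl n (gen_group n G) \<rho> $$ (a, b) = (1 / of_nat n) * (\<Sum>s\<in>smat n v ` {..<n}. (s * \<rho> * dag s) $$ (a, b))"
      using ab by (simp add: twirl_def msum_def card_gen gen_eq[symmetric])
    also have "\<dots> = (1 / of_nat n) * (\<Sum>y<n. (smat n v y * \<rho> * smat n v y) $$ (a, b))"
      by (simp add: sum.reindex[OF smat_inj] smat_dag)
    also have "\<dots> = (1 / of_nat n) * (\<Sum>y<n. v a * cnj (v (xor a y)) * \<rho> $$ (xor a y, xor b y) * v (xor b y) * cnj (v b))"
    proof -
      have "(smat n v y * \<rho> * smat n v y) $$ (a, b) = v a * cnj (v (xor a y)) * \<rho> $$ (xor a y, xor b y) * v (xor b y) * cnj (v b)"
        if y: "y < n" for y
      proof -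
        have "(smat n v y * \<rho> * smat n v y) $$ (a, b) = (smat n v y * \<rho>) $$ (a, xor b y) * v (xor b y) * cnj (v b)"
          using ab y \<rho>c by (intro smat_right mult_carrier_mat[where nc = n] smat_carrier) auto
        also have "(smat n v y * \<rho>) $$ (a, xor b y) = v a * cnj (v (xor a y)) * \<rho> $$ (xor a y, xor b y)"
          using ab y \<rho>c xor_lt[of b l y] by (intro smat_left) auto
        finally show ?thesis .
      qed
      then show ?thesis by simp
    qed
    also have "\<dots> = (1 / of_nat n) * (\<Sum>a'<n. T a')"
    proof -
      have "(\<Sum>y<n. v a * cnj (v (xor a y)) * \<rho> $$ (xor a y, xor b y) * v (xor b y) * cnj (v b))
          = (\<Sum>a'<n. v a * cnj (v (xor a (xor a a'))) * \<rho> $$ (xor a (xor a a'), xor b (xor a a')) * v (xor b (xor a a')) * cnj (v b))"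
        by (rule reidx[where F = "\<lambda>y. v a * cnj (v (xor a y)) * \<rho> $$ (xor a y, xor b y) * v (xor b y) * cnj (v b)", OF ab(1)])
      also have "\<dots> = (\<Sum>a'<n. T a')"
      proof (intro sum.cong refl)
        fix a' have "xor b (xor a a') = c a'" unfolding c_def by (metis xor.assoc xor.commute xor.left_commute)
        then show "v a * cnj (v (xor a (xor a a'))) * \<rho> $$ (xor a (xor a a'), xor b (xor a a')) * v (xor b (xor a a')) * cnj (v b) = T a'"
          by (simp add: T_def)
      qed
      finally show ?thesis by simp
    qed
    finally have L: "twirl n (gen_group n G) \<rho> $$ (a, b) = (1 / of_nat n) * (\<Sum>a'<n. T a')" .
    have "msum n (\<lambda>x. complex_of_real (p x) \<cdot>\<^sub>m (Zvec l x * R0 * dag (Zvec l x))) (F2 l) $$ (a, b)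
        = (\<Sum>x\<in>F2 l. complex_of_real (p x) * (chi l x a * R0 $$ (a, b) * chi l x b))"
    proof -
      have dZ: "dim_row (Zvec l x) = n" "dim_col (dag (Zvec l x)) = n" for x
        using Zvec_carrier[of l x] dag_carrier[OF Zvec_carrier[of l x]] by auto
      have e: "(complex_of_real (p x) \<cdot>\<^sub>m (Zvec l x * R0 * dag (Zvec l x))) $$ (a, b)
           = complex_of_real (p x) * (chi l x a * R0 $$ (a, b) * chi l x b)" for x
      proof -
        have "(complex_of_real (p x) \<cdot>\<^sub>m (Zvec l x * R0 * dag (Zvec l x))) $$ (a, b)
           = complex_of_real (p x) * (Zvec l x * R0 * dag (Zvec l x)) $$ (a, b)"
          using ab dZ[of x] by simp
        also have "(Zvec l x * R0 * dag (Zvec l x)) $$ (a, b) = chi l x a * R0 $$ (a, b) * chi l x b"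
          by (rule ZRZ[OF ab])
        finally show ?thesis .
      qed
      show ?thesis using ab by (simp add: msum_def e)
    qed
    also have "\<dots> = (\<Sum>x\<in>F2 l. \<Sum>a'<n. \<Sum>b'<n. (cnj (uu a') * \<rho> $$ (a', b') * uu b' * R0 $$ (a, b)) * (chi l x a' * chi l x b' * chi l x a * chi l x b))"
      by (simp add: pq w_def chi_cnj sum_distrib_left sum_distrib_right mult_ac)
    also have "\<dots> = (\<Sum>a'<n. \<Sum>b'<n. \<Sum>x\<in>F2 l. (cnj (uu a') * \<rho> $$ (a', b') * uu b' * R0 $$ (a, b)) * (chi l x a' * chi l x b' * chi l x a * chi l x b))"
      by (rule swap3) (auto simp: F2_finite)
    also have "\<dots> = (\<Sum>a'<n. \<Sum>b'<n. (cnj (uu a') * \<rho> $$ (a', b') * uu b' * R0 $$ (a, b)) * (if b' = c a' then of_nat n else 0))"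
      using ab by (intro sum.cong refl) (simp add: sum_distrib_left[symmetric] chi4 c_def)
    also have "\<dots> = (\<Sum>a'<n. (cnj (uu a') * \<rho> $$ (a', c a') * uu (c a') * R0 $$ (a, b)) * of_nat n)"
    proof (intro sum.cong refl)
      fix a' assume "a' \<in> {..<n}"
      then have "c a' \<in> {..<n}" using clt by simp
      then show "(\<Sum>b'<n. (cnj (uu a') * \<rho> $$ (a', b') * uu b' * R0 $$ (a, b)) * (if b' = c a' then of_nat n else 0))
          = (cnj (uu a') * \<rho> $$ (a', c a') * uu (c a') * R0 $$ (a, b)) * of_nat n"
        by (simp add: if_distrib sum.delta' cong: if_cong)
    qed
    also have "\<dots> = (\<Sum>a'<n. (1 / of_nat n) * T a')"
    proof (intro sum.cong refl)
      fix a' assume "a' \<in> {..<n}"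
      have k: "cc l * cc l * (cc l * cc l) * of_nat n = 1 / (of_nat n :: complex)"
        using cc_sq[of l] by (simp add: field_simps)
      have "(cnj (uu a') * \<rho> $$ (a', c a') * uu (c a') * R0 $$ (a, b)) * of_nat n
          = (cc l * cc l * (cc l * cc l) * of_nat n) * T a'"
        using ab by (simp add: R0_idx uu_def T_def cc_cnj mult_ac)
      then show "(cnj (uu a') * \<rho> $$ (a', c a') * uu (c a') * R0 $$ (a, b)) * of_nat n = (1 / of_nat n) * T a'"
        by (simp only: k)
    qed
    also have "\<dots> = (1 / of_nat n) * (\<Sum>a'<n. T a')" by (simp add: sum_distrib_left)
    finally show "twirl n (gen_group n G) \<rho> $$ (a, b) = msum n (\<lambda>x. complex_of_real (p x) \<cdot>\<^sub>m (Zvec l x * R0 * dag (Zvec l x))) (F2 l) $$ (a, b)"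
      using L by simp
  qed (auto simp: twirl_def msum_def)
  show ?thesis using pnn psum eq unfolding \<rho>_def by blast
qed

end

theorem proposition5:
  fixes l :: nat and V :: "complex mat" and E :: "complex mat \<Rightarrow> complex mat"
  assumes "V \<in> clifford l 3"
    and "diagonal_mat V"
    and "quantum_channel l E"
  shows "\<exists>p :: (nat \<Rightarrow> bool) \<Rightarrow> real.
           (\<forall>x\<in>F2 l. 0 \<le> p x) \<and> (\<Sum>x\<in>F2 l. p x) = 1 \<and>
           twirl (2 ^ l) (gen_group (2 ^ l) {V * Xq l i * dag V | i. i < l})
                 (E (ketbra (V *\<^sub>v plus_state l)))
           = msum (2 ^ l) (\<lambda>x. complex_of_real (p x) \<cdot>\<^sub>m
                 (Zvec l x * ketbra (V *\<^sub>v plus_state l) * dag (Zvec l x))) (F2 l)"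
proof -
  interpret diagV l V using clif3[OF assms(1)] assms(2) by unfold_locales
  obtain Ks where Kc: "\<forall>K\<in>set Ks. K \<in> carrier_mat n n"
    and Kcomp: "msum_list n (map (\<lambda>K. dag K * K) Ks) = 1\<^sub>m n"
    and KE: "\<forall>\<rho>\<in>carrier_mat n n. E \<rho> = msum_list n (map (\<lambda>K. K * \<rho> * dag K) Ks)"
    using assms(3) unfolding quantum_channel_def by blast
  have "E R0 = msum_list n (map (\<lambda>K. K * R0 * dag K) Ks)" using KE R0c by blast
  then show ?thesis using main[OF Kc Kcomp] by simp
qed


end
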